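(* Let $H,\mathsf H$ be semigroups, $\mathfrak h\colon H\to\mathsf H$ a homomorphism, $X$ an $H$-set, $S$ an order-complete ordered $\mathsf H$-set with completion $\overline S$, and $f\colon X\to\overline S$. Then: [l] $\mathrm{lE}^f_{\mathcal H_{\le}}=f$ if and only if $f\in\mathcal H_{\le}$; [u] $\mathrm{uE}_f^{\mathcal H_{\ge}}=f$ if and only if $f\in\mathcal H_{\ge}$. If in addition $\mathsf H$ is a group, the following three conditions are equivalent: (1) $f\in\overline{\mathcal H}$; (2) $\mathrm{lE}^f_{\overline{\mathcal H}}=f$; (3) $\mathrm{uE}_f^{\overline{\mathcal H}}=f$.
   Context: $X$ is an $H$-set: an action $(h,x)\mapsto hx$ with $h_1(h_2x)=(h_1h_2)x$ (and $1x=x$ if $H$ has identity $1$); similarly $S$ is an $\mathsf H$-set, with a partial order $\leqslant$ such that $s_1\leqslant s_2\Rightarrow\mathsf h s_1\leqslant\mathsf h s_2$. $S$ is order-complete: every nonempty subset bounded below (above) in $S$ has an infimum (supremum) in $S$. The completion $\overline S$ adjoins a new least element $\inf S$ if $S$ has none and a new greatest element $\sup S$ if $S$ has none; the action is extended by $\mathsf h\cdot\inf S=\inf S$, $\mathsf h\cdot\sup S=\sup S$ for the adjoined symbols; in $\overline S$, $\sup\varnothing$ is the least and $\inf\varnothing$ the greatest element. Functions $X\to\overline S$ are ordered pointwise. Classes: $\overline{\mathcal H}$ = functions $\varphi\colon X\to\overline S$ with $\varphi(hx)=\mathfrak h(h)\varphi(x)$ for all $h\in H,x\in X$; $\mathcal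 H_{\le}$ = functions $\varphi\colon X\to\overline S$ with $\varphi(hx)\leqslant\mathfrak h(h)\varphi(x)$ for all $h,x$; $\mathcal H_{\ge}$ = functions $\varphi\colon X\to\overline S$ with $\mathfrak h(h)\varphi(x)\leqslant\varphi(hx)$ for all $h,x$. For a class $\Phi$: $\mathrm{lE}^f_\Phi(x)=\sup\{\varphi(x):\varphi\in\Phi,\ \varphi\leqslant f\text{ on }X\}$ and $\mathrm{uE}_f^\Phi(x)=\inf\{\varphi(x):\varphi\in\Phi,\ f\leqslant\varphi\text{ on }X\}$, in $\overline S$. *)

theory Defs
  imports "HOL-Algebra.Group"
begin

definition semigrp :: "('a, 'b) monoid_scheme \<Rightarrow> bool" where
  "semigrp G \<longleftrightarrow>
     (\<forall>x\<in>carrier G. \<forall>y\<in>carrier G. x \<otimes>\<^bsub>G\<^esub> y \<in> carrier G) \<and>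
     (\<forall>x\<in>carrier G. \<forall>y\<in>carrier G. \<forall>z\<in>carrier G.
        (x \<otimes>\<^bsub>G\<^esub> y) \<otimes>\<^bsub>G\<^esub> z = x \<otimes>\<^bsub>G\<^esub> (y \<otimes>\<^bsub>G\<^esub> z))"

definition is_identity :: "('a, 'b) monoid_scheme \<Rightarrow> 'a \<Rightarrow> bool" where
  "is_identity G e \<longleftrightarrow> e \<in> carrier G \<and>
     (\<forall>h\<in>carrier G. e \<otimes>\<^bsub>G\<^esub> h = h \<and> h \<otimes>\<^bsub>G\<^esub> e = h)"

definition Hset :: "('h, 'b) monoid_scheme \<Rightarrow> 'x set \<Rightarrow> ('h \<Rightarrow> 'x \<Rightarrow> 'x) \<Rightarrow> bool" where
  "Hset H X act \<longleftrightarrow>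
     (\<forall>h\<in>carrier H. \<forall>x\<in>X. act h x \<in> X) \<and>
     (\<forall>h1\<in>carrier H. \<forall>h2\<in>carrier H. \<forall>x\<in>X. act h1 (act h2 x) = act (h1 \<otimes>\<^bsub>H\<^esub> h2) x) \<and>
     (\<forall>e. is_identity H e \<longrightarrow> (\<forall>x\<in>X. act e x = x))"

text \<open>The ordered set S (the whole type 's with its partial order) is an ordered
  HH-set via actS.\<close>
definition ordered_Hset :: "('g, 'b) monoid_scheme \<Rightarrow> ('g \<Rightarrow> 's::order \<Rightarrow> 's) \<Rightarrow> bool" where
  "ordered_Hset G actS \<longleftrightarrow>
     Hset G (UNIV :: 's set) actS \<and>
     (\<forall>g\<in>carrier G. \<forall>s1 s2. s1 \<le> s2 \<longrightarrow> actS g s1 \<le> actS g s2)"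

definition order_complete :: "'s::order itself \<Rightarrow> bool" where
  "order_complete _ \<longleftrightarrow>
     (\<forall>A::'s set. A \<noteq> {} \<and> (\<exists>b. \<forall>a\<in>A. b \<le> a) \<longrightarrow>
        (\<exists>m. (\<forall>a\<in>A. m \<le> a) \<and> (\<forall>b. (\<forall>a\<in>A. b \<le> a) \<longrightarrow> b \<le> m))) \<and>
     (\<forall>A::'s set. A \<noteq> {} \<and> (\<exists>b. \<forall>a\<in>A. a \<le> b) \<longrightarrow>
        (\<exists>m. (\<forall>a\<in>A. a \<le> m) \<and> (\<forall>b. (\<forall>a\<in>A. a \<le> b) \<longrightarrow> m \<le> b)))"

text \<open>Ambient type for the completion: possibly adjoined bottom / top symbols.\<close>
datatype 's ext = NegInf | Fin 's | PosInf

fun ext_le :: "'s::order ext \<Rightarrow> 's ext \<Rightarrow> bool" where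
  "ext_le NegInf _ = True"
| "ext_le (Fin a) NegInf = False"
| "ext_le (Fin a) (Fin b) = (a \<le> b)"
| "ext_le (Fin a) PosInf = True"
| "ext_le PosInf y = (y = PosInf)"

definition Sbar :: "'s::order ext set" where
  "Sbar = range Fin
     \<union> (if (\<exists>m::'s. \<forall>s. m \<le> s) then {} else {NegInf})
     \<union> (if (\<exists>m::'s. \<forall>s. s \<le> m) then {} else {PosInf})"

fun ext_act :: "('g \<Rightarrow> 's \<Rightarrow> 's) \<Rightarrow> 'g \<Rightarrow> 's ext \<Rightarrow> 's ext" where
  "ext_act actS g NegInf = NegInf"
| "ext_act actS g (Fin s) = Fin (actS g s)"
| "ext_act actS g PosInf = PosInf"

definition sup_bar :: "'s::order ext set \<Rightarrow> 's ext" where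
  "sup_bar B = (THE s. s \<in> Sbar \<and> (\<forall>b\<in>B. ext_le b s) \<and>
                        (\<forall>t\<in>Sbar. (\<forall>b\<in>B. ext_le b t) \<longrightarrow> ext_le s t))"

definition inf_bar :: "'s::order ext set \<Rightarrow> 's ext" where
  "inf_bar B = (THE s. s \<in> Sbar \<and> (\<forall>b\<in>B. ext_le s b) \<and>
                        (\<forall>t\<in>Sbar. (\<forall>b\<in>B. ext_le t b) \<longrightarrow> ext_le t s))"

definition maps_to_bar :: "'x set \<Rightarrow> ('x \<Rightarrow> 's::order ext) \<Rightarrow> bool" where
  "maps_to_bar X \<phi> \<longleftrightarrow> (\<forall>x\<in>X. \<phi> x \<in> Sbar)"

definition Hbar_class ::
  "('h, 'b) monoid_scheme \<Rightarrow> ('h \<Rightarrow> 'g) \<Rightarrow> 'x set \<Rightarrow> ('h \<Rightarrow> 'x \<Rightarrow> 'x)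
     \<Rightarrow> ('g \<Rightarrow> 's::order \<Rightarrow> 's) \<Rightarrow> ('x \<Rightarrow> 's ext) set" where
  "Hbar_class H hh X act actS = {\<phi>. maps_to_bar X \<phi> \<and>
     (\<forall>h\<in>carrier H. \<forall>x\<in>X. \<phi> (act h x) = ext_act actS (hh h) (\<phi> x))}"

definition Hle_class ::
  "('h, 'b) monoid_scheme \<Rightarrow> ('h \<Rightarrow> 'g) \<Rightarrow> 'x set \<Rightarrow> ('h \<Rightarrow> 'x \<Rightarrow> 'x)
     \<Rightarrow> ('g \<Rightarrow> 's::order \<Rightarrow> 's) \<Rightarrow> ('x \<Rightarrow> 's ext) set" where
  "Hle_class H hh X act actS = {\<phi>. maps_to_bar X \<phi> \<and>
     (\<forall>h\<in>carrier H. \<forall>x\<in>X. ext_le (\<phi> (act h x)) (ext_act actS (hh h) (\<phi> x)))}"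

definition Hge_class ::
  "('h, 'b) monoid_scheme \<Rightarrow> ('h \<Rightarrow> 'g) \<Rightarrow> 'x set \<Rightarrow> ('h \<Rightarrow> 'x \<Rightarrow> 'x)
     \<Rightarrow> ('g \<Rightarrow> 's::order \<Rightarrow> 's) \<Rightarrow> ('x \<Rightarrow> 's ext) set" where
  "Hge_class H hh X act actS = {\<phi>. maps_to_bar X \<phi> \<and>
     (\<forall>h\<in>carrier H. \<forall>x\<in>X. ext_le (ext_act actS (hh h) (\<phi> x)) (\<phi> (act h x)))}"

definition lE :: "'x set \<Rightarrow> ('x \<Rightarrow> 's::order ext) set \<Rightarrow> ('x \<Rightarrow> 's ext) \<Rightarrow> 'x \<Rightarrow> 's ext" where
  "lE X Phi f x = sup_bar {\<phi> x |\<phi>. \<phi> \<in> Phi \<and> (\<forall>y\<in>X. ext_le (\<phi> y) (f y))}"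

definition uE :: "'x set \<Rightarrow> ('x \<Rightarrow> 's::order ext) set \<Rightarrow> ('x \<Rightarrow> 's ext) \<Rightarrow> 'x \<Rightarrow> 's ext" where
  "uE X Phi f x = inf_bar {\<phi> x |\<phi>. \<phi> \<in> Phi \<and> (\<forall>y\<in>X. ext_le (f y) (\<phi> y))}"

end

theory Submission
  imports Defs
begin

lemma ext_le_refl[simp]: "ext_le a a"
  by (cases a) auto

lemma ext_le_trans: "ext_le a b \<Longrightarrow> ext_le b c \<Longrightarrow> ext_le (a::'s::order ext) c"
  by (cases a; cases b; cases c) auto

lemma ext_le_antisym: "ext_le a b \<Longrightarrow> ext_le b a \<Longrightarrow> (a::'s::order ext) = b"
  by (cases a; cases b) auto

lemma ext_le_top[simp]: "ext_le b PosInf"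
  by (cases b) auto

lemma ext_le_bot[simp]: "ext_le t NegInf \<longleftrightarrow> t = NegInf"
  by (cases t) auto

lemma ext_le_PosInf[simp]: "ext_le PosInf t \<longleftrightarrow> t = PosInf"
  by (cases t) auto

lemma Fin_Sbar[simp]: "Fin a \<in> Sbar"
  unfolding Sbar_def by auto

lemma NegInf_Sbar[simp]: "(NegInf \<in> (Sbar::'s::order ext set)) \<longleftrightarrow> \<not> (\<exists>m::'s. \<forall>s. m \<le> s)"
  unfolding Sbar_def by auto

lemma PosInf_Sbar[simp]: "(PosInf \<in> (Sbar::'s::order ext set)) \<longleftrightarrow> \<not> (\<exists>m::'s. \<forall>s. s \<le> m)"
  unfolding Sbar_def by auto

definition isSup :: "'s::order ext set \<Rightarrow> 's ext \<Rightarrow> bool" where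
  "isSup B s \<longleftrightarrow> s \<in> Sbar \<and> (\<forall>b\<in>B. ext_le b s) \<and> (\<forall>t\<in>Sbar. (\<forall>b\<in>B. ext_le b t) \<longrightarrow> ext_le s t)"

definition isInf :: "'s::order ext set \<Rightarrow> 's ext \<Rightarrow> bool" where
  "isInf B s \<longleftrightarrow> s \<in> Sbar \<and> (\<forall>b\<in>B. ext_le s b) \<and> (\<forall>t\<in>Sbar. (\<forall>b\<in>B. ext_le t b) \<longrightarrow> ext_le t s)"

lemma isSup_sup_bar: "isSup B s \<Longrightarrow> sup_bar B = s"
  unfolding sup_bar_def
  apply (rule the_equality)
   apply (simp add: isSup_def)
  by (meson ext_le_antisym isSup_def)

lemma isInf_inf_bar: "isInf B s \<Longrightarrow> inf_bar B = s"
  unfolding inf_bar_def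
  apply (rule the_equality)
   apply (simp add: isInf_def)
  by (meson ext_le_antisym isInf_def)

lemma sup_exists:
  assumes oc: "order_complete TYPE('s::order)" and B: "B \<subseteq> (Sbar :: 's ext set)"
  shows "\<exists>s. isSup B s"
proof (cases "PosInf \<in> B")
  case True
  then show ?thesis using B unfolding isSup_def
    by (rule_tac x=PosInf in exI) (auto)
next
  case noP: False
  define A where "A = {a. Fin a \<in> B}"
  show ?thesis
  proof (cases "A = {}")
    case True
    have BN: "B \<subseteq> {NegInf}"
    proof
      fix b :: "'s ext" assume "b \<in> B" then show "b \<in> {NegInf}" using True noP unfolding A_def by (cases b) auto
    qed
    show ?thesis
    proof (cases "\<exists>m::'s. \<forall>s. m \<le> s")
      case True
      then obtain m :: 's where m: "\<forall>s. m \<le> s" by blast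
      have "isSup B (Fin m)" unfolding isSup_def
      proof (intro conjI ballI impI)
        show "Fin m \<in> Sbar" by auto
      next
        fix b :: "'s ext" assume "b \<in> B" then show "ext_le b (Fin m)" using BN by auto
      next
        fix t :: "'s ext" assume "t \<in> Sbar"
        then show "ext_le (Fin m) t" using m True by (cases t) auto
      qed
      then show ?thesis by blast
    next
      case False
      have "isSup B NegInf" unfolding isSup_def using BN False by auto
      then show ?thesis by blast
    qed
  next
    case Ane: False
    show ?thesis
    proof (cases "\<exists>b. \<forall>a\<in>A. a \<le> b")
      case True
      then obtain m where m1: "\<forall>a\<in>A. a \<le> m" and m2: "\<forall>b. (\<forall>a\<in>A. a \<le> b) \<longrightarrow> m \<le> b"
      proof -
        have "\<forall>A::'s set. A \<noteq> {} \<and> (\<exists>b. \<forall>a\<in>A. a \<le> b) \<longrightarrow>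
        (\<exists>m. (\<forall>a\<in>A. a \<le> m) \<and> (\<forall>b. (\<forall>a\<in>A. a \<le> b) \<longrightarrow> m \<le> b))"
          using oc unfolding order_complete_def by (rule conjunct2)
        then have "\<exists>m. (\<forall>a\<in>A. a \<le> m) \<and> (\<forall>b. (\<forall>a\<in>A. a \<le> b) \<longrightarrow> m \<le> b)"
          using Ane True by blast
        then show ?thesis using that by blast
      qed
      have "isSup B (Fin m)" unfolding isSup_def
      proof (intro conjI ballI impI)
        show "Fin m \<in> Sbar" by auto
      next
        fix b :: "'s ext" assume "b \<in> B" then show "ext_le b (Fin m)" using m1 noP unfolding A_def by (cases b) auto
      next
        fix t :: "'s ext" assume t: "t \<in> Sbar" "\<forall>b\<in>B. ext_le b t"
        obtain a where a: "Fin a \<in> B" using Ane A_def by auto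
        show "ext_le (Fin m) t"
        proof (cases t)
          case NegInf then show ?thesis using t a by auto
        next
          case (Fin c)
          then have "\<forall>a\<in>A. a \<le> c" using t unfolding A_def by auto
          then show ?thesis using m2 Fin by auto
        next
          case PosInf then show ?thesis by auto
        qed
      qed
      then show ?thesis by blast
    next
      case unb: False
      have "isSup B PosInf" unfolding isSup_def
      proof (intro conjI ballI impI)
        have "\<not> (\<exists>m::'s. \<forall>s. s \<le> m)"
        proof
          assume "\<exists>m::'s. \<forall>s. s \<le> m"
          then obtain m :: 's where "\<forall>s. s \<le> m" by blast
          then have "\<forall>a\<in>A. a \<le> m" by blast
          with unb show False by blast
        qed
        then show "PosInf \<in> (Sbar :: 's ext set)" using PosInf_Sbar by blast
      next
        fix b :: "'s ext" show "ext_le b PosInf" by (cases b) auto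
      next
        fix t :: "'s ext" assume t: "t \<in> Sbar" "\<forall>b\<in>B. ext_le b t"
        obtain a where a: "Fin a \<in> B" using Ane A_def by auto
        show "ext_le PosInf t"
        proof (cases t)
          case NegInf then show ?thesis using t a by auto
        next
          case (Fin c)
          then have "\<forall>a\<in>A. a \<le> c" using t unfolding A_def by auto
          then show ?thesis using unb by auto
        next
          case PosInf then show ?thesis by auto
        qed
      qed
      then show ?thesis by blast
    qed
  qed
qed

lemma inf_exists:
  assumes oc: "order_complete TYPE('s::order)" and B: "B \<subseteq> (Sbar :: 's ext set)"
  shows "\<exists>s. isInf B s"
proof (cases "NegInf \<in> B")
  case True
  then show ?thesis using B unfolding isInf_def
    by (rule_tac x=NegInf in exI) (auto)
next
  case noP: False
  define A where "A = {a. Fin a \<in> B}"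
  show ?thesis
  proof (cases "A = {}")
    case True
    have BN: "B \<subseteq> {PosInf}"
    proof
      fix b :: "'s ext" assume "b \<in> B" then show "b \<in> {PosInf}" using True noP unfolding A_def by (cases b) auto
    qed
    show ?thesis
    proof (cases "\<exists>m::'s. \<forall>s. s \<le> m")
      case True
      then obtain m :: 's where m: "\<forall>s. s \<le> m" by blast
      have "isInf B (Fin m)" unfolding isInf_def
      proof (intro conjI ballI impI)
        show "Fin m \<in> Sbar" by auto
      next
        fix b :: "'s ext" assume "b \<in> B" then show "ext_le (Fin m) b" using BN by auto
      next
        fix t :: "'s ext" assume "t \<in> Sbar"
        then show "ext_le t (Fin m)" using m True by (cases t) auto
      qed
      then show ?thesis by blast
    next
      case False
      have "isInf B PosInf" unfolding isInf_def using BN False by auto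
      then show ?thesis by blast
    qed
  next
    case Ane: False
    show ?thesis
    proof (cases "\<exists>b. \<forall>a\<in>A. b \<le> a")
      case True
      then obtain m where m1: "\<forall>a\<in>A. m \<le> a" and m2: "\<forall>b. (\<forall>a\<in>A. b \<le> a) \<longrightarrow> b \<le> m"
      proof -
        have "\<forall>A::'s set. A \<noteq> {} \<and> (\<exists>b. \<forall>a\<in>A. b \<le> a) \<longrightarrow>
        (\<exists>m. (\<forall>a\<in>A. m \<le> a) \<and> (\<forall>b. (\<forall>a\<in>A. b \<le> a) \<longrightarrow> b \<le> m))"
          using oc unfolding order_complete_def by (rule conjunct1)
        then have "\<exists>m. (\<forall>a\<in>A. m \<le> a) \<and> (\<forall>b. (\<forall>a\<in>A. b \<le> a) \<longrightarrow> b \<le> m)"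
          using Ane True by blast
        then show ?thesis using that by blast
      qed
      have "isInf B (Fin m)" unfolding isInf_def
      proof (intro conjI ballI impI)
        show "Fin m \<in> Sbar" by auto
      next
        fix b :: "'s ext" assume "b \<in> B" then show "ext_le (Fin m) b" using m1 noP unfolding A_def by (cases b) auto
      next
        fix t :: "'s ext" assume t: "t \<in> Sbar" "\<forall>b\<in>B. ext_le t b"
        obtain a where a: "Fin a \<in> B" using Ane A_def by auto
        show "ext_le t (Fin m)"
        proof (cases t)
          case PosInf then show ?thesis using t a by auto
        next
          case (Fin c)
          then have "\<forall>a\<in>A. c \<le> a" using t unfolding A_def by auto
          then show ?thesis using m2 Fin by auto
        next
          case NegInf then show ?thesis by auto
        qed
      qed
      then show ?thesis by blast
    next
      case unb: False
      have "isInf B NegInf" unfolding isInf_def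
      proof (intro conjI ballI impI)
        have "\<not> (\<exists>m::'s. \<forall>s. m \<le> s)"
        proof
          assume "\<exists>m::'s. \<forall>s. m \<le> s"
          then obtain m :: 's where "\<forall>s. m \<le> s" by blast
          then have "\<forall>a\<in>A. m \<le> a" by blast
          with unb show False by blast
        qed
        then show "NegInf \<in> (Sbar :: 's ext set)" using NegInf_Sbar by blast
      next
        fix b :: "'s ext" show "ext_le NegInf b" by auto
      next
        fix t :: "'s ext" assume t: "t \<in> Sbar" "\<forall>b\<in>B. ext_le t b"
        obtain a where a: "Fin a \<in> B" using Ane A_def by auto
        show "ext_le t NegInf"
        proof (cases t)
          case PosInf then show ?thesis using t a by auto
        next
          case (Fin c)
          then have "\<forall>a\<in>A. c \<le> a" using t unfolding A_def by auto
          then show ?thesis using unb by auto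
        next
          case NegInf then show ?thesis by auto
        qed
      qed
      then show ?thesis by blast
    qed
  qed
qed


lemma ext_act_mono:
  assumes "ordered_Hset HH actS" "g \<in> carrier HH" "ext_le a b"
  shows "ext_le (ext_act actS g a) (ext_act actS g (b::'s::order ext))"
  using assms unfolding ordered_Hset_def by (cases a; cases b) auto

lemma ext_act_Sbar: "a \<in> Sbar \<Longrightarrow> ext_act actS g a \<in> (Sbar::'s::order ext set)"
  by (cases a) auto

lemma act_inv:
  assumes "group HH" "ordered_Hset HH actS" "g \<in> carrier HH" "g' \<in> carrier HH"
     "g' \<otimes>\<^bsub>HH\<^esub> g = \<one>\<^bsub>HH\<^esub>"
  shows "ext_act actS g' (ext_act actS g a) = (a::'s::order ext)"
proof -
  have id: "is_identity HH \<one>\<^bsub>HH\<^esub>" using assms(1) unfolding is_identity_def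
    by (simp add: group.is_monoid monoid.l_one monoid.r_one monoid.one_closed)
  have "actS g' (actS g s) = s" for s
    using assms id unfolding ordered_Hset_def Hset_def by auto
  then show ?thesis by (cases a) auto
qed

lemma lE_self:
  assumes "f \<in> Phi" "\<forall>\<phi>\<in>Phi. maps_to_bar X \<phi>" "x \<in> X"
  shows "lE X Phi f x = f x"
  unfolding lE_def
proof (rule isSup_sup_bar)
  show "isSup {\<phi> x |\<phi>. \<phi> \<in> Phi \<and> (\<forall>y\<in>X. ext_le (\<phi> y) (f y))} (f x)"
    unfolding isSup_def using assms unfolding maps_to_bar_def by fastforce
qed

lemma uE_self:
  assumes "f \<in> Phi" "\<forall>\<phi>\<in>Phi. maps_to_bar X \<phi>" "x \<in> X"
  shows "uE X Phi f x = f x"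
  unfolding uE_def
proof (rule isInf_inf_bar)
  show "isInf {\<phi> x |\<phi>. \<phi> \<in> Phi \<and> (\<forall>y\<in>X. ext_le (f y) (\<phi> y))} (f x)"
    unfolding isInf_def using assms unfolding maps_to_bar_def by fastforce
qed

lemma lE_isSup:
  assumes "order_complete TYPE('s::order)" "\<forall>\<phi>\<in>Phi. maps_to_bar X \<phi>" "x \<in> X"
    "lE X Phi f x = (f x :: 's ext)"
  shows "isSup {\<phi> x |\<phi>. \<phi> \<in> Phi \<and> (\<forall>y\<in>X. ext_le (\<phi> y) (f y))} (f x)"
proof -
  have "{\<phi> x |\<phi>. \<phi> \<in> Phi \<and> (\<forall>y\<in>X. ext_le (\<phi> y) (f y))} \<subseteq> Sbar"
    using assms(2,3) unfolding maps_to_bar_def by auto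
  then obtain s where s: "isSup {\<phi> x |\<phi>. \<phi> \<in> Phi \<and> (\<forall>y\<in>X. ext_le (\<phi> y) (f y))} s"
    using sup_exists[OF assms(1)] by blast
  then have "lE X Phi f x = s" unfolding lE_def by (rule isSup_sup_bar)
  then show ?thesis using s assms(4) by simp
qed

lemma uE_isInf:
  assumes "order_complete TYPE('s::order)" "\<forall>\<phi>\<in>Phi. maps_to_bar X \<phi>" "x \<in> X"
    "uE X Phi f x = (f x :: 's ext)"
  shows "isInf {\<phi> x |\<phi>. \<phi> \<in> Phi \<and> (\<forall>y\<in>X. ext_le (f y) (\<phi> y))} (f x)"
proof -
  have "{\<phi> x |\<phi>. \<phi> \<in> Phi \<and> (\<forall>y\<in>X. ext_le (f y) (\<phi> y))} \<subseteq> Sbar"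
    using assms(2,3) unfolding maps_to_bar_def by auto
  then obtain s where s: "isInf {\<phi> x |\<phi>. \<phi> \<in> Phi \<and> (\<forall>y\<in>X. ext_le (f y) (\<phi> y))} s"
    using inf_exists[OF assms(1)] by blast
  then have "uE X Phi f x = s" unfolding uE_def by (rule isInf_inf_bar)
  then show ?thesis using s assms(4) by simp
qed


lemma hom_carrier: "hh \<in> hom H HH \<Longrightarrow> h \<in> carrier H \<Longrightarrow> hh h \<in> carrier HH"
  unfolding hom_def Pi_def by blast

lemma part_le:
  assumes hom: "hh \<in> hom H HH" and hs: "Hset H X act" and os: "ordered_Hset HH actS"
    and oc: "order_complete TYPE('s::order)" and mf: "maps_to_bar X (f :: 'x \<Rightarrow> 's ext)"
    and eq: "\<forall>x\<in>X. lE X (Hle_class H hh X act actS) f x = f x"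
  shows "f \<in> Hle_class H hh X act actS"
proof -
  let ?P = "Hle_class H hh X act actS"
  have PM: "\<forall>\<phi>\<in>?P. maps_to_bar X \<phi>" unfolding Hle_class_def by auto
  have key: "ext_le (f (act h x)) (ext_act actS (hh h) (f x))" if h: "h \<in> carrier H" and x: "x \<in> X" for h x
  proof -
    have y: "act h x \<in> X" using hs h x unfolding Hset_def by auto
    have g: "hh h \<in> carrier HH" using hom h by (rule hom_carrier)
    have Sx: "isSup {\<phi> x |\<phi>. \<phi> \<in> ?P \<and> (\<forall>y\<in>X. ext_le (\<phi> y) (f y))} (f x)"
      by (rule lE_isSup[OF oc PM x eq[rule_format, OF x]])
    have Sy: "isSup {\<phi> (act h x) |\<phi>. \<phi> \<in> ?P \<and> (\<forall>y\<in>X. ext_le (\<phi> y) (f y))} (f (act h x))"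
      by (rule lE_isSup[OF oc PM y eq[rule_format, OF y]])
    have fx: "f x \<in> Sbar" using mf x unfolding maps_to_bar_def by auto
    have ub: "ext_le b (ext_act actS (hh h) (f x))"
      if bB: "b \<in> {\<phi> (act h x) |\<phi>. \<phi> \<in> ?P \<and> (\<forall>y\<in>X. ext_le (\<phi> y) (f y))}" for b
    proof -
      obtain \<phi> where b: "b = \<phi> (act h x)" and ph: "\<phi> \<in> ?P" and le: "\<forall>y\<in>X. ext_le (\<phi> y) (f y)"
        using bB by blast
      have 1: "ext_le (\<phi> (act h x)) (ext_act actS (hh h) (\<phi> x))"
        using ph h x unfolding Hle_class_def by auto
      have "ext_le (\<phi> x) (f x)" using le x by auto
      then have "ext_le (ext_act actS (hh h) (\<phi> x)) (ext_act actS (hh h) (f x))"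
        using ext_act_mono[OF os g] by blast
      then show ?thesis using 1 b ext_le_trans by blast
    qed
    have "\<forall>t\<in>Sbar. (\<forall>b\<in>{\<phi> (act h x) |\<phi>. \<phi> \<in> ?P \<and> (\<forall>y\<in>X. ext_le (\<phi> y) (f y))}. ext_le b t) \<longrightarrow> ext_le (f (act h x)) t"
      using Sy unfolding isSup_def by (elim conjE)
    then have "(\<forall>b\<in>{\<phi> (act h x) |\<phi>. \<phi> \<in> ?P \<and> (\<forall>y\<in>X. ext_le (\<phi> y) (f y))}. ext_le b (ext_act actS (hh h) (f x))) \<longrightarrow> ?thesis"
      by (rule bspec) (rule ext_act_Sbar[OF fx])
    moreover have "\<forall>b\<in>{\<phi> (act h x) |\<phi>. \<phi> \<in> ?P \<and> (\<forall>y\<in>X. ext_le (\<phi> y) (f y))}. ext_le b (ext_act actS (hh h) (f x))"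
      by (rule ballI) (rule ub)
    ultimately show ?thesis by (rule mp)
  qed
  show ?thesis unfolding Hle_class_def mem_Collect_eq
  proof (intro conjI ballI)
    show "maps_to_bar X f" by (rule mf)
  next
    fix h x assume "h \<in> carrier H" "x \<in> X"
    then show "ext_le (f (act h x)) (ext_act actS (hh h) (f x))" by (rule key)
  qed
qed

lemma part_ge:
  assumes hom: "hh \<in> hom H HH" and hs: "Hset H X act" and os: "ordered_Hset HH actS"
    and oc: "order_complete TYPE('s::order)" and mf: "maps_to_bar X (f :: 'x \<Rightarrow> 's ext)"
    and eq: "\<forall>x\<in>X. uE X (Hge_class H hh X act actS) f x = f x"
  shows "f \<in> Hge_class H hh X act actS"
proof -
  let ?P = "Hge_class H hh X act actS"
  have PM: "\<forall>\<phi>\<in>?P. maps_to_bar X \<phi>" unfolding Hge_class_def by auto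
  have key: "ext_le (ext_act actS (hh h) (f x)) (f (act h x))" if h: "h \<in> carrier H" and x: "x \<in> X" for h x
  proof -
    have y: "act h x \<in> X" using hs h x unfolding Hset_def by auto
    have g: "hh h \<in> carrier HH" using hom h by (rule hom_carrier)
    have Sx: "isInf {\<phi> x |\<phi>. \<phi> \<in> ?P \<and> (\<forall>y\<in>X. ext_le (f y) (\<phi> y))} (f x)"
      by (rule uE_isInf[OF oc PM x eq[rule_format, OF x]])
    have Sy: "isInf {\<phi> (act h x) |\<phi>. \<phi> \<in> ?P \<and> (\<forall>y\<in>X. ext_le (f y) (\<phi> y))} (f (act h x))"
      by (rule uE_isInf[OF oc PM y eq[rule_format, OF y]])
    have fx: "f x \<in> Sbar" using mf x unfolding maps_to_bar_def by auto
    have ub: "ext_le (ext_act actS (hh h) (f x)) b"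
      if bB: "b \<in> {\<phi> (act h x) |\<phi>. \<phi> \<in> ?P \<and> (\<forall>y\<in>X. ext_le (f y) (\<phi> y))}" for b
    proof -
      obtain \<phi> where b: "b = \<phi> (act h x)" and ph: "\<phi> \<in> ?P" and le: "\<forall>y\<in>X. ext_le (f y) (\<phi> y)"
        using bB by blast
      have 1: "ext_le (ext_act actS (hh h) (\<phi> x)) (\<phi> (act h x))"
        using ph h x unfolding Hge_class_def by auto
      have "ext_le (f x) (\<phi> x)" using le x by auto
      then have "ext_le (ext_act actS (hh h) (f x)) (ext_act actS (hh h) (\<phi> x))"
        using ext_act_mono[OF os g] by blast
      then show ?thesis using 1 b ext_le_trans by blast
    qed
    have "\<forall>t\<in>Sbar. (\<forall>b\<in>{\<phi> (act h x) |\<phi>. \<phi> \<in> ?P \<and> (\<forall>y\<in>X. ext_le (f y) (\<phi> y))}. ext_le t b) \<longrightarrow> ext_le t (f (act h x))"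
      using Sy unfolding isInf_def by (elim conjE)
    then have "(\<forall>b\<in>{\<phi> (act h x) |\<phi>. \<phi> \<in> ?P \<and> (\<forall>y\<in>X. ext_le (f y) (\<phi> y))}. ext_le (ext_act actS (hh h) (f x)) b) \<longrightarrow> ?thesis"
      by (rule bspec) (rule ext_act_Sbar[OF fx])
    moreover have "\<forall>b\<in>{\<phi> (act h x) |\<phi>. \<phi> \<in> ?P \<and> (\<forall>y\<in>X. ext_le (f y) (\<phi> y))}. ext_le (ext_act actS (hh h) (f x)) b"
      by (rule ballI) (rule ub)
    ultimately show ?thesis by (rule mp)
  qed
  show ?thesis unfolding Hge_class_def mem_Collect_eq
  proof (intro conjI ballI)
    show "maps_to_bar X f" by (rule mf)
  next
    fix h x assume "h \<in> carrier H" "x \<in> X"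
    then show "ext_le (ext_act actS (hh h) (f x)) (f (act h x))" by (rule key)
  qed
qed


lemma isSup_least: "isSup B s \<Longrightarrow> t \<in> Sbar \<Longrightarrow> (\<And>b. b \<in> B \<Longrightarrow> ext_le b t) \<Longrightarrow> ext_le s t"
  unfolding isSup_def by blast

lemma isSup_ub: "isSup B s \<Longrightarrow> b \<in> B \<Longrightarrow> ext_le b s"
  unfolding isSup_def by blast

lemma isInf_greatest: "isInf B s \<Longrightarrow> t \<in> Sbar \<Longrightarrow> (\<And>b. b \<in> B \<Longrightarrow> ext_le t b) \<Longrightarrow> ext_le t s"
  unfolding isInf_def by blast

lemma isInf_lb: "isInf B s \<Longrightarrow> b \<in> B \<Longrightarrow> ext_le s b"
  unfolding isInf_def by blast

lemma part_bar_l: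
  assumes grp: "group HH" and hom: "hh \<in> hom H HH" and hs: "Hset H X act" and os: "ordered_Hset HH actS"
    and oc: "order_complete TYPE('s::order)" and mf: "maps_to_bar X (f :: 'x \<Rightarrow> 's ext)"
    and eq: "\<forall>x\<in>X. lE X (Hbar_class H hh X act actS) f x = f x"
  shows "f \<in> Hbar_class H hh X act actS"
proof -
  let ?P = "Hbar_class H hh X act actS"
  have PM: "\<forall>\<phi>\<in>?P. maps_to_bar X \<phi>" unfolding Hbar_class_def by auto
  have key: "f (act h x) = ext_act actS (hh h) (f x)" if h: "h \<in> carrier H" and x: "x \<in> X" for h x
  proof -
    have y: "act h x \<in> X" using hs h x unfolding Hset_def by auto
    have g: "hh h \<in> carrier HH" using hom h by (rule hom_carrier)
    define g' where "g' = inv\<^bsub>HH\<^esub> (hh h)"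
    have g': "g' \<in> carrier HH" unfolding g'_def using grp g by (simp add: group.inv_closed)
    have i1: "g' \<otimes>\<^bsub>HH\<^esub> hh h = \<one>\<^bsub>HH\<^esub>" unfolding g'_def using grp g by (simp add: group.l_inv)
    have i2: "hh h \<otimes>\<^bsub>HH\<^esub> g' = \<one>\<^bsub>HH\<^esub>" unfolding g'_def using grp g by (simp add: group.r_inv)
    have Sx: "isSup {\<phi> x |\<phi>. \<phi> \<in> ?P \<and> (\<forall>y\<in>X. ext_le (\<phi> y) (f y))} (f x)"
      by (rule lE_isSup[OF oc PM x eq[rule_format, OF x]])
    have Sy: "isSup {\<phi> (act h x) |\<phi>. \<phi> \<in> ?P \<and> (\<forall>y\<in>X. ext_le (\<phi> y) (f y))} (f (act h x))"
      by (rule lE_isSup[OF oc PM y eq[rule_format, OF y]])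
    have fx: "f x \<in> Sbar" using mf x unfolding maps_to_bar_def by auto
    have fy: "f (act h x) \<in> Sbar" using mf y unfolding maps_to_bar_def by auto
    have A: "ext_le (f (act h x)) (ext_act actS (hh h) (f x))"
    proof (rule isSup_least[OF Sy ext_act_Sbar[OF fx]])
      fix b assume bB: "b \<in> {\<phi> (act h x) |\<phi>. \<phi> \<in> ?P \<and> (\<forall>y\<in>X. ext_le (\<phi> y) (f y))}"
      obtain \<phi> where b: "b = \<phi> (act h x)" and ph: "\<phi> \<in> ?P" and le: "\<forall>y\<in>X. ext_le (\<phi> y) (f y)"
        using bB by blast
      have 1: "\<phi> (act h x) = ext_act actS (hh h) (\<phi> x)"
        using ph h x unfolding Hbar_class_def by auto
      have "\<phi> x \<in> {\<phi> x |\<phi>. \<phi> \<in> ?P \<and> (\<forall>y\<in>X. ext_le (\<phi> y) (f y))}" using ph le by blast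
      then have "ext_le (\<phi> x) (f x)" by (rule isSup_ub[OF Sx])
      then have "ext_le (ext_act actS (hh h) (\<phi> x)) (ext_act actS (hh h) (f x))"
        by (rule ext_act_mono[OF os g])
      then show "ext_le b (ext_act actS (hh h) (f x))" using 1 b by simp
    qed
    have B0: "ext_le (f x) (ext_act actS g' (f (act h x)))"
    proof (rule isSup_least[OF Sx ext_act_Sbar[OF fy]])
      fix b assume bB: "b \<in> {\<phi> x |\<phi>. \<phi> \<in> ?P \<and> (\<forall>y\<in>X. ext_le (\<phi> y) (f y))}"
      obtain \<phi> where b: "b = \<phi> x" and ph: "\<phi> \<in> ?P" and le: "\<forall>y\<in>X. ext_le (\<phi> y) (f y)"
        using bB by blast
      have 1: "\<phi> (act h x) = ext_act actS (hh h) (\<phi> x)"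
        using ph h x unfolding Hbar_class_def by auto
      have "\<phi> (act h x) \<in> {\<phi> (act h x) |\<phi>. \<phi> \<in> ?P \<and> (\<forall>y\<in>X. ext_le (\<phi> y) (f y))}" using ph le by blast
      then have "ext_le (\<phi> (act h x)) (f (act h x))" by (rule isSup_ub[OF Sy])
      then have "ext_le (ext_act actS g' (\<phi> (act h x))) (ext_act actS g' (f (act h x)))"
        by (rule ext_act_mono[OF os g'])
      moreover have "ext_act actS g' (\<phi> (act h x)) = \<phi> x"
        using 1 act_inv[OF grp os g g' i1] by simp
      ultimately show "ext_le b (ext_act actS g' (f (act h x)))" using b by simp
    qed
    then have "ext_le (ext_act actS (hh h) (f x)) (ext_act actS (hh h) (ext_act actS g' (f (act h x))))"
      by (rule ext_act_mono[OF os g])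
    then have B: "ext_le (ext_act actS (hh h) (f x)) (f (act h x))"
      using act_inv[OF grp os g' g i2] by simp
    show ?thesis using A B by (rule ext_le_antisym)
  qed
  show ?thesis unfolding Hbar_class_def mem_Collect_eq
  proof (intro conjI ballI)
    show "maps_to_bar X f" by (rule mf)
  next
    fix h x assume "h \<in> carrier H" "x \<in> X"
    then show "f (act h x) = ext_act actS (hh h) (f x)" by (rule key)
  qed
qed


lemma part_bar_u:
  assumes grp: "group HH" and hom: "hh \<in> hom H HH" and hs: "Hset H X act" and os: "ordered_Hset HH actS"
    and oc: "order_complete TYPE('s::order)" and mf: "maps_to_bar X (f :: 'x \<Rightarrow> 's ext)"
    and eq: "\<forall>x\<in>X. uE X (Hbar_class H hh X act actS) f x = f x"
  shows "f \<in> Hbar_class H hh X act actS"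
proof -
  let ?P = "Hbar_class H hh X act actS"
  have PM: "\<forall>\<phi>\<in>?P. maps_to_bar X \<phi>" unfolding Hbar_class_def by auto
  have key: "f (act h x) = ext_act actS (hh h) (f x)" if h: "h \<in> carrier H" and x: "x \<in> X" for h x
  proof -
    have y: "act h x \<in> X" using hs h x unfolding Hset_def by auto
    have g: "hh h \<in> carrier HH" using hom h by (rule hom_carrier)
    define g' where "g' = inv\<^bsub>HH\<^esub> (hh h)"
    have g': "g' \<in> carrier HH" unfolding g'_def using grp g by (simp add: group.inv_closed)
    have i1: "g' \<otimes>\<^bsub>HH\<^esub> hh h = \<one>\<^bsub>HH\<^esub>" unfolding g'_def using grp g by (simp add: group.l_inv)
    have i2: "hh h \<otimes>\<^bsub>HH\<^esub> g' = \<one>\<^bsub>HH\<^esub>" unfolding g'_def using grp g by (simp add: group.r_inv)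
    have Sx: "isInf {\<phi> x |\<phi>. \<phi> \<in> ?P \<and> (\<forall>y\<in>X. ext_le (f y) (\<phi> y))} (f x)"
      by (rule uE_isInf[OF oc PM x eq[rule_format, OF x]])
    have Sy: "isInf {\<phi> (act h x) |\<phi>. \<phi> \<in> ?P \<and> (\<forall>y\<in>X. ext_le (f y) (\<phi> y))} (f (act h x))"
      by (rule uE_isInf[OF oc PM y eq[rule_format, OF y]])
    have fx: "f x \<in> Sbar" using mf x unfolding maps_to_bar_def by auto
    have fy: "f (act h x) \<in> Sbar" using mf y unfolding maps_to_bar_def by auto
    have A: "ext_le (ext_act actS (hh h) (f x)) (f (act h x))"
    proof (rule isInf_greatest[OF Sy ext_act_Sbar[OF fx]])
      fix b assume bB: "b \<in> {\<phi> (act h x) |\<phi>. \<phi> \<in> ?P \<and> (\<forall>y\<in>X. ext_le (f y) (\<phi> y))}"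
      obtain \<phi> where b: "b = \<phi> (act h x)" and ph: "\<phi> \<in> ?P" and le: "\<forall>y\<in>X. ext_le (f y) (\<phi> y)"
        using bB by blast
      have 1: "\<phi> (act h x) = ext_act actS (hh h) (\<phi> x)"
        using ph h x unfolding Hbar_class_def by auto
      have "\<phi> x \<in> {\<phi> x |\<phi>. \<phi> \<in> ?P \<and> (\<forall>y\<in>X. ext_le (f y) (\<phi> y))}" using ph le by blast
      then have "ext_le (f x) (\<phi> x)" by (rule isInf_lb[OF Sx])
      then have "ext_le (ext_act actS (hh h) (f x)) (ext_act actS (hh h) (\<phi> x))"
        by (rule ext_act_mono[OF os g])
      then show "ext_le (ext_act actS (hh h) (f x)) b" using 1 b by simp
    qed
    have B0: "ext_le (ext_act actS g' (f (act h x))) (f x)"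
    proof (rule isInf_greatest[OF Sx ext_act_Sbar[OF fy]])
      fix b assume bB: "b \<in> {\<phi> x |\<phi>. \<phi> \<in> ?P \<and> (\<forall>y\<in>X. ext_le (f y) (\<phi> y))}"
      obtain \<phi> where b: "b = \<phi> x" and ph: "\<phi> \<in> ?P" and le: "\<forall>y\<in>X. ext_le (f y) (\<phi> y)"
        using bB by blast
      have 1: "\<phi> (act h x) = ext_act actS (hh h) (\<phi> x)"
        using ph h x unfolding Hbar_class_def by auto
      have "\<phi> (act h x) \<in> {\<phi> (act h x) |\<phi>. \<phi> \<in> ?P \<and> (\<forall>y\<in>X. ext_le (f y) (\<phi> y))}" using ph le by blast
      then have "ext_le (f (act h x)) (\<phi> (act h x))" by (rule isInf_lb[OF Sy])
      then have "ext_le (ext_act actS g' (f (act h x))) (ext_act actS g' (\<phi> (act h x)))"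
        by (rule ext_act_mono[OF os g'])
      moreover have "ext_act actS g' (\<phi> (act h x)) = \<phi> x"
        using 1 act_inv[OF grp os g g' i1] by simp
      ultimately show "ext_le (ext_act actS g' (f (act h x))) b" using b by simp
    qed
    then have "ext_le (ext_act actS (hh h) (ext_act actS g' (f (act h x)))) (ext_act actS (hh h) (f x))"
      by (rule ext_act_mono[OF os g])
    then have B: "ext_le (f (act h x)) (ext_act actS (hh h) (f x))"
      using act_inv[OF grp os g' g i2] by simp
    show ?thesis using B A by (rule ext_le_antisym)
  qed
  show ?thesis unfolding Hbar_class_def mem_Collect_eq
  proof (intro conjI ballI)
    show "maps_to_bar X f" by (rule mf)
  next
    fix h x assume "h \<in> carrier H" "x \<in> X"
    then show "f (act h x) = ext_act actS (hh h) (f x)" by (rule key)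
  qed
qed

theorem theorem1:
  fixes H :: "('h, 'b) monoid_scheme"
    and HH :: "('g, 'c) monoid_scheme"
    and hh :: "'h \<Rightarrow> 'g"
    and X :: "'x set"
    and act :: "'h \<Rightarrow> 'x \<Rightarrow> 'x"
    and actS :: "'g \<Rightarrow> 's::order \<Rightarrow> 's"
    and f :: "'x \<Rightarrow> 's ext"
  assumes "semigrp H" and "semigrp HH"
    and "hh \<in> hom H HH"
    and "Hset H X act"
    and "ordered_Hset HH actS"
    and "order_complete TYPE('s)"
    and "maps_to_bar X f"
  shows "((\<forall>x\<in>X. lE X (Hle_class H hh X act actS) f x = f x) \<longleftrightarrow> f \<in> Hle_class H hh X act actS)
       \<and> ((\<forall>x\<in>X. uE X (Hge_class H hh X act actS) f x = f x) \<longleftrightarrow> f \<in> Hge_class H hh X act actS)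
       \<and> (group HH \<longrightarrow>
            ((f \<in> Hbar_class H hh X act actS \<longleftrightarrow>
               (\<forall>x\<in>X. lE X (Hbar_class H hh X act actS) f x = f x))
           \<and> ((\<forall>x\<in>X. lE X (Hbar_class H hh X act actS) f x = f x) \<longleftrightarrow>
               (\<forall>x\<in>X. uE X (Hbar_class H hh X act actS) f x = f x))))"
proof -
  have P1: "\<forall>\<phi>\<in>Hle_class H hh X act actS. maps_to_bar X \<phi>" unfolding Hle_class_def by auto
  have P2: "\<forall>\<phi>\<in>Hge_class H hh X act actS. maps_to_bar X \<phi>" unfolding Hge_class_def by auto
  have P3: "\<forall>\<phi>\<in>Hbar_class H hh X act actS. maps_to_bar X \<phi>" unfolding Hbar_class_def by auto
  have L: "(\<forall>x\<in>X. lE X (Hle_class H hh X act actS) f x = f x) \<longleftrightarrow> f \<in> Hle_class H hh X act actS"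
    using part_le[OF assms(3,4,5,6,7)] lE_self[OF _ P1] by blast
  have U: "(\<forall>x\<in>X. uE X (Hge_class H hh X act actS) f x = f x) \<longleftrightarrow> f \<in> Hge_class H hh X act actS"
    using part_ge[OF assms(3,4,5,6,7)] uE_self[OF _ P2] by blast
  have G: "group HH \<longrightarrow>
            ((f \<in> Hbar_class H hh X act actS \<longleftrightarrow>
               (\<forall>x\<in>X. lE X (Hbar_class H hh X act actS) f x = f x))
           \<and> ((\<forall>x\<in>X. lE X (Hbar_class H hh X act actS) f x = f x) \<longleftrightarrow>
               (\<forall>x\<in>X. uE X (Hbar_class H hh X act actS) f x = f x)))"
  proof
    assume grp: "group HH"
    note a = part_bar_l[OF grp assms(3,4,5,6,7)] part_bar_u[OF grp assms(3,4,5,6,7)]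
      lE_self[OF _ P3] uE_self[OF _ P3]
    show "(f \<in> Hbar_class H hh X act actS \<longleftrightarrow>
               (\<forall>x\<in>X. lE X (Hbar_class H hh X act actS) f x = f x))
           \<and> ((\<forall>x\<in>X. lE X (Hbar_class H hh X act actS) f x = f x) \<longleftrightarrow>
               (\<forall>x\<in>X. uE X (Hbar_class H hh X act actS) f x = f x))"
      using a by blast
  qed
  show ?thesis using L U G by blast
qed

end
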